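(* Let $R \subseteq S$ be an extension of commutative rings such that $S$ is generated as an $R$-module by $1, f_1, \ldots, f_n$, where $n>0$ and $f_i \in S$. Suppose $S$ has a presentation as an $R$-module $$R^{\oplus q} \xrightarrow{\ \mathbb M\ } R^{\oplus(n+1)} \xrightarrow{\ \varepsilon\ } S \to 0$$ (exact), where $q>0$, $\mathbb M$ is an $(n+1)\times q$ matrix with entries in $R$, and $\varepsilon = [1\ f_1\ \cdots\ f_n]$, i.e. $\varepsilon(a_0,\ldots,a_n)^T = a_0 + a_1f_1+\cdots+a_nf_n$. Let $J$ be the ideal of $S$ generated by all entries of the first row of $\mathbb M$. Then the strict closure $R^*$ of $R$ in $S$ satisfies $R^* \subseteq R + J$.
   Context: For an extension of commutative rings $R \subseteq S$, the strict closure of $R$ in $S$ is $R^* = \{\alpha \in S \mid \alpha\otimes 1 = 1\otimes \alpha \text{ in } S\otimes_R S\}$. *)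

theory Defs
  imports Main
begin

text \<open>The ambient commutative ring S is the type 'a; the subring R is a set.\<close>

definition subring :: "'a::comm_ring_1 set \<Rightarrow> bool" where
  "subring R \<longleftrightarrow> 0 \<in> R \<and> 1 \<in> R \<and>
     (\<forall>x\<in>R. \<forall>y\<in>R. x + y \<in> R \<and> x - y \<in> R \<and> x * y \<in> R)"

text \<open>Generators of the free abelian group on S x S (finitely supported integer functions).\<close>
definition tdelta :: "'a \<Rightarrow> 'a \<Rightarrow> ('a \<times> 'a \<Rightarrow> int)" where
  "tdelta x y = (\<lambda>p. if p = (x, y) then 1 else 0)"

text \<open>The subgroup of relations whose quotient is the tensor product S (x)_R S.\<close>
inductive_set tensor_rel :: "'a::comm_ring_1 set \<Rightarrow> ('a \<times> 'a \<Rightarrow> int) set"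
  for R :: "'a set" where
  zero: "(\<lambda>_. 0) \<in> tensor_rel R"
| add: "u \<in> tensor_rel R \<Longrightarrow> v \<in> tensor_rel R \<Longrightarrow> (\<lambda>p. u p + v p) \<in> tensor_rel R"
| neg: "u \<in> tensor_rel R \<Longrightarrow> (\<lambda>p. - u p) \<in> tensor_rel R"
| left: "(\<lambda>p. tdelta (x + x') y p - tdelta x y p - tdelta x' y p) \<in> tensor_rel R"
| right: "(\<lambda>p. tdelta x (y + y') p - tdelta x y p - tdelta x y' p) \<in> tensor_rel R"
| scal: "r \<in> R \<Longrightarrow> (\<lambda>p. tdelta (r * x) y p - tdelta x (r * y) p) \<in> tensor_rel R"

text \<open>alpha (x) 1 = 1 (x) alpha in S (x)_R S.\<close>
definition strict_closure :: "'a::comm_ring_1 set \<Rightarrow> 'a set" where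
  "strict_closure R = {\<alpha>. (\<lambda>p. tdelta \<alpha> 1 p - tdelta 1 \<alpha> p) \<in> tensor_rel R}"

end

theory Submission
  imports Defs
begin

lemma sum_tdelta:
  fixes g :: "'a \<times> 'a \<Rightarrow> 'b::comm_ring_1"
  assumes "finite A" "(a,b) \<in> A"
  shows "(\<Sum>p\<in>A. of_int (tdelta a b p) * g p) = g (a,b)"
proof -
  have "(\<Sum>p\<in>A. of_int (tdelta a b p) * g p) = (\<Sum>p\<in>A. if p = (a,b) then g p else 0)"
    by (rule sum.cong) (auto simp: tdelta_def)
  also have "\<dots> = g (a,b)" using assms by (simp add: sum.delta')
  finally show ?thesis .
qed

lemma sum_supp_eq:
  fixes g :: "'a \<times> 'a \<Rightarrow> 'b::comm_ring_1"
  assumes "finite A" "{p. u p \<noteq> 0} \<subseteq> A"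
  shows "(\<Sum>p\<in>{p. u p \<noteq> 0}. of_int (u p) * g p) = (\<Sum>p\<in>A. of_int (u p) * g p)"
  by (rule sum.mono_neutral_left) (use assms in auto)

lemma tensor_rel_map:
  fixes \<Phi> :: "'a::comm_ring_1 \<times> 'a \<Rightarrow> 'a" and J :: "'a set"
  assumes J0: "0 \<in> J" and Jadd: "\<And>a b. a \<in> J \<Longrightarrow> b \<in> J \<Longrightarrow> a + b \<in> J"
    and Jneg: "\<And>a. a \<in> J \<Longrightarrow> - a \<in> J"
    and L: "\<And>x x' y. \<Phi> (x + x', y) - \<Phi> (x, y) - \<Phi> (x', y) \<in> J"
    and Rt: "\<And>x y y'. \<Phi> (x, y + y') - \<Phi> (x, y) - \<Phi> (x, y') \<in> J"
    and Sc: "\<And>r x y. r \<in> R \<Longrightarrow> \<Phi> (r * x, y) - \<Phi> (x, r * y) \<in> J"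
  assumes "u \<in> tensor_rel R"
  shows "finite {p. u p \<noteq> 0} \<and> (\<Sum>p\<in>{p. u p \<noteq> 0}. of_int (u p) * \<Phi> p) \<in> J"
  using assms(7)
proof induction
  case zero
  then show ?case using J0 by simp
next
  case (add u v)
  let ?A = "{p. u p \<noteq> 0} \<union> {p. v p \<noteq> 0}"
  have fA: "finite ?A" using add by simp
  have s: "{p. u p + v p \<noteq> 0} \<subseteq> ?A" by auto
  have fin: "finite {p. u p + v p \<noteq> 0}" using finite_subset[OF s fA] .
  have "(\<Sum>p\<in>{p. u p + v p \<noteq> 0}. of_int (u p + v p) * \<Phi> p)
      = (\<Sum>p\<in>?A. of_int (u p + v p) * \<Phi> p)"
    by (rule sum_supp_eq[OF fA s])
  also have "\<dots> = (\<Sum>p\<in>?A. of_int (u p) * \<Phi> p) + (\<Sum>p\<in>?A. of_int (v p) * \<Phi> p)"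
    by (simp add: distrib_right sum.distrib)
  also have "\<dots> = (\<Sum>p\<in>{p. u p \<noteq> 0}. of_int (u p) * \<Phi> p) + (\<Sum>p\<in>{p. v p \<noteq> 0}. of_int (v p) * \<Phi> p)"
    using sum_supp_eq[OF fA, of u \<Phi>] sum_supp_eq[OF fA, of v \<Phi>] by auto
  finally show ?case using fin add Jadd by simp
next
  case (neg u)
  have "(\<Sum>p\<in>{p. - u p \<noteq> 0}. of_int (- u p) * \<Phi> p) = - (\<Sum>p\<in>{p. u p \<noteq> 0}. of_int (u p) * \<Phi> p)"
    by (simp add: sum_negf)
  then show ?case using neg Jneg by simp
next
  case (left x x' y)
  let ?A = "{(x + x', y), (x, y), (x', y)}"
  let ?u = "\<lambda>p. tdelta (x + x') y p - tdelta x y p - tdelta x' y p"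
  have s: "{p. ?u p \<noteq> 0} \<subseteq> ?A" by (auto simp: tdelta_def split: if_splits)
  have fA: "finite ?A" by simp
  have "(\<Sum>p\<in>{p. ?u p \<noteq> 0}. of_int (?u p) * \<Phi> p) = (\<Sum>p\<in>?A. of_int (?u p) * \<Phi> p)"
    by (rule sum_supp_eq[OF fA s])
  also have "\<dots> = (\<Sum>p\<in>?A. of_int (tdelta (x + x') y p) * \<Phi> p)
     - (\<Sum>p\<in>?A. of_int (tdelta x y p) * \<Phi> p) - (\<Sum>p\<in>?A. of_int (tdelta x' y p) * \<Phi> p)"
    by (simp add: left_diff_distrib sum_subtractf)
  also have "\<dots> = \<Phi> (x + x', y) - \<Phi> (x, y) - \<Phi> (x', y)"
    by (simp add: sum_tdelta[OF fA])
  finally show ?case using L finite_subset[OF s fA] by simp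
next
  case (right x y y')
  let ?A = "{(x, y + y'), (x, y), (x, y')}"
  let ?u = "\<lambda>p. tdelta x (y + y') p - tdelta x y p - tdelta x y' p"
  have s: "{p. ?u p \<noteq> 0} \<subseteq> ?A" by (auto simp: tdelta_def split: if_splits)
  have fA: "finite ?A" by simp
  have "(\<Sum>p\<in>{p. ?u p \<noteq> 0}. of_int (?u p) * \<Phi> p) = (\<Sum>p\<in>?A. of_int (?u p) * \<Phi> p)"
    by (rule sum_supp_eq[OF fA s])
  also have "\<dots> = (\<Sum>p\<in>?A. of_int (tdelta x (y + y') p) * \<Phi> p)
     - (\<Sum>p\<in>?A. of_int (tdelta x y p) * \<Phi> p) - (\<Sum>p\<in>?A. of_int (tdelta x y' p) * \<Phi> p)"
    by (simp add: left_diff_distrib sum_subtractf)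
  also have "\<dots> = \<Phi> (x, y + y') - \<Phi> (x, y) - \<Phi> (x, y')"
    by (simp add: sum_tdelta[OF fA])
  finally show ?case using Rt finite_subset[OF s fA] by simp
next
  case (scal r x y)
  let ?A = "{(r * x, y), (x, r * y)}"
  let ?u = "\<lambda>p. tdelta (r * x) y p - tdelta x (r * y) p"
  have s: "{p. ?u p \<noteq> 0} \<subseteq> ?A" by (auto simp: tdelta_def split: if_splits)
  have fA: "finite ?A" by simp
  have "(\<Sum>p\<in>{p. ?u p \<noteq> 0}. of_int (?u p) * \<Phi> p) = (\<Sum>p\<in>?A. of_int (?u p) * \<Phi> p)"
    by (rule sum_supp_eq[OF fA s])
  also have "\<dots> = (\<Sum>p\<in>?A. of_int (tdelta (r * x) y p) * \<Phi> p)
     - (\<Sum>p\<in>?A. of_int (tdelta x (r * y) p) * \<Phi> p)"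
    by (simp add: left_diff_distrib sum_subtractf)
  also have "\<dots> = \<Phi> (r * x, y) - \<Phi> (x, r * y)"
    by (simp add: sum_tdelta[OF fA])
  finally show ?case using Sc[OF scal] finite_subset[OF s fA] by simp
qed

theorem theorem2p6:
  fixes R :: "'a::comm_ring_1 set" and f :: "nat \<Rightarrow> 'a" and n q :: nat
    and M :: "nat \<Rightarrow> nat \<Rightarrow> 'a"
  assumes "subring R"
    and "n > 0" and "q > 0"
    and "\<forall>i\<le>n. \<forall>j<q. M i j \<in> R"
    and surj: "\<forall>s. \<exists>a. (\<forall>i\<le>n. a i \<in> R) \<and> s = a 0 + (\<Sum>i=1..n. a i * f i)"
    and exact: "\<forall>a. (\<forall>i\<le>n. a i \<in> R) \<longrightarrow>
        (a 0 + (\<Sum>i=1..n. a i * f i) = 0 \<longleftrightarrow>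
         (\<exists>c. (\<forall>j<q. c j \<in> R) \<and> (\<forall>i\<le>n. a i = (\<Sum>j<q. M i j * c j))))"
  shows "strict_closure R \<subseteq>
    {r + (\<Sum>j<q. s j * M 0 j) | r s. r \<in> R}"
proof
  fix \<alpha> assume \<alpha>: "\<alpha> \<in> strict_closure R"
  have sub: "0 \<in> R" "1 \<in> R" "\<And>x y. x \<in> R \<Longrightarrow> y \<in> R \<Longrightarrow> x + y \<in> R"
    "\<And>x y. x \<in> R \<Longrightarrow> y \<in> R \<Longrightarrow> x - y \<in> R" "\<And>x y. x \<in> R \<Longrightarrow> y \<in> R \<Longrightarrow> x * y \<in> R"
    using assms(1) unfolding subring_def by auto
  define J where "J = {z. \<exists>s. z = (\<Sum>j<q. s j * M 0 j)}"
  define cv where "cv = (\<lambda>a y. (\<forall>i\<le>n. a i \<in> R) \<and> y = a 0 + (\<Sum>i=1..n. a i * f i))"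
  define coef where "coef = (\<lambda>y. SOME a. cv a y)"
  have coef: "cv (coef y) y" for y
  proof -
    obtain a where "cv a y" using surj unfolding cv_def by blast
    then show ?thesis unfolding coef_def by (rule someI[where P="\<lambda>a. cv a y"])
  qed
  have J0: "0 \<in> J" unfolding J_def by (auto intro: exI[of _ "\<lambda>_. 0"])
  have Jadd: "a + b \<in> J" if ab: "a \<in> J" "b \<in> J" for a b
  proof -
    obtain s where "a = (\<Sum>j<q. s j * M 0 j)" using ab(1) unfolding J_def by blast
    moreover obtain t where "b = (\<Sum>j<q. t j * M 0 j)" using ab(2) unfolding J_def by blast
    ultimately
    have "a + b = (\<Sum>j<q. (s j + t j) * M 0 j)" by (simp add: distrib_right sum.distrib)
    then show ?thesis unfolding J_def mem_Collect_eq by (rule exI[of _ "\<lambda>j. s j + t j"])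
  qed
  have Jmul: "x * a \<in> J" if aJ: "a \<in> J" for a x
  proof -
    obtain s where "a = (\<Sum>j<q. s j * M 0 j)" using aJ unfolding J_def by blast
    then have "x * a = (\<Sum>j<q. (x * s j) * M 0 j)" by (simp add: sum_distrib_left mult.assoc)
    then show ?thesis unfolding J_def mem_Collect_eq by (rule exI[of _ "\<lambda>j. x * s j"])
  qed
  have Jneg: "- a \<in> J" if "a \<in> J" for a
    using Jmul[OF that, of "-1"] by simp
  have Jdiff: "a - b \<in> J" if "a \<in> J" "b \<in> J" for a b
    using Jadd[OF that(1) Jneg[OF that(2)]] by simp
  have key: "a 0 - b 0 \<in> J" if "cv a y" "cv b y" for a b y
  proof -
    let ?d = "\<lambda>i. a i - b i"
    have dR: "\<forall>i\<le>n. ?d i \<in> R" using that sub(4) unfolding cv_def by auto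
    have "?d 0 + (\<Sum>i=1..n. ?d i * f i) = (a 0 + (\<Sum>i=1..n. a i * f i)) - (b 0 + (\<Sum>i=1..n. b i * f i))"
      by (simp add: left_diff_distrib sum_subtractf)
    also have "\<dots> = 0" using that unfolding cv_def by simp
    finally have eq0: "?d 0 + (\<Sum>i=1..n. ?d i * f i) = 0" .
    have "\<exists>c. (\<forall>j<q. c j \<in> R) \<and> (\<forall>i\<le>n. ?d i = (\<Sum>j<q. M i j * c j))"
      using exact[rule_format, of ?d] dR eq0 by blast
    then obtain c where "\<forall>i\<le>n. ?d i = (\<Sum>j<q. M i j * c j)" by blast
    then have "?d 0 = (\<Sum>j<q. c j * M 0 j)" by (simp add: mult.commute)
    then show ?thesis unfolding J_def mem_Collect_eq by (rule exI[of _ c])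
  qed
  define \<Phi> where "\<Phi> = (\<lambda>(x, y). x * coef y 0)"
  have L: "\<Phi> (x + x', y) - \<Phi> (x, y) - \<Phi> (x', y) \<in> J" for x x' y
    using J0 by (simp add: \<Phi>_def algebra_simps)
  have Rt: "\<Phi> (x, y + y') - \<Phi> (x, y) - \<Phi> (x, y') \<in> J" for x y y'
  proof -
    have cvadd: "cv (\<lambda>i. a i + b i) (z + z')" if "cv a z" "cv b z'" for a b z z'
      using that sub(3) unfolding cv_def by (auto simp: distrib_right sum.distrib)
    have "cv (\<lambda>i. coef y i + coef y' i) (y + y')" by (rule cvadd[OF coef coef])
    from key[OF coef this] have "coef (y + y') 0 - coef y 0 - coef y' 0 \<in> J"
      by (simp add: algebra_simps)
    from Jmul[OF this, of x] show ?thesis by (simp add: \<Phi>_def algebra_simps)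
  qed
  have Sc: "\<Phi> (r * x, y) - \<Phi> (x, r * y) \<in> J" if "r \<in> R" for r x y
  proof -
    have cvm: "cv (\<lambda>i. r * a i) (r * z)" if "cv a z" for a z
      using that sub(5) \<open>r \<in> R\<close> unfolding cv_def
      by (auto simp: distrib_left sum_distrib_left mult.assoc)
    have "cv (\<lambda>i. r * coef y i) (r * y)" by (rule cvm[OF coef])
    from key[OF this coef] have "r * coef y 0 - coef (r * y) 0 \<in> J" by simp
    from Jmul[OF this, of x] show ?thesis by (simp add: \<Phi>_def algebra_simps)
  qed
  let ?u = "\<lambda>p. tdelta \<alpha> 1 p - tdelta 1 \<alpha> p"
  have uR: "?u \<in> tensor_rel R" using \<alpha> unfolding strict_closure_def by simp
  have G: "(\<Sum>p\<in>{p. ?u p \<noteq> 0}. of_int (?u p) * \<Phi> p) \<in> J"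
    using tensor_rel_map[of J \<Phi> R, OF J0 Jadd Jneg L Rt Sc uR] by blast
  let ?A = "{(\<alpha>, 1), (1, \<alpha>)}"
  have s: "{p. ?u p \<noteq> 0} \<subseteq> ?A" by (auto simp: tdelta_def split: if_splits)
  have fA: "finite ?A" by simp
  have "(\<Sum>p\<in>{p. ?u p \<noteq> 0}. of_int (?u p) * \<Phi> p) = (\<Sum>p\<in>?A. of_int (?u p) * \<Phi> p)"
    by (rule sum_supp_eq[OF fA s])
  also have "\<dots> = (\<Sum>p\<in>?A. of_int (tdelta \<alpha> 1 p) * \<Phi> p) - (\<Sum>p\<in>?A. of_int (tdelta 1 \<alpha> p) * \<Phi> p)"
    by (simp add: left_diff_distrib sum_subtractf)
  also have "\<dots> = \<Phi> (\<alpha>, 1) - \<Phi> (1, \<alpha>)"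
    by (simp add: sum_tdelta[OF fA])
  finally have G2: "\<alpha> * coef 1 0 - coef \<alpha> 0 \<in> J" using G by (simp add: \<Phi>_def)
  have "cv (\<lambda>i. if i = 0 then 1 else 0) 1" using sub unfolding cv_def by auto
  from key[OF coef this] have "coef 1 0 - 1 \<in> J" by simp
  from Jmul[OF this, of \<alpha>] have "\<alpha> * coef 1 0 - \<alpha> \<in> J" by (simp add: algebra_simps)
  from Jdiff[OF G2 this] have "\<alpha> - coef \<alpha> 0 \<in> J" by simp
  then obtain s where s: "\<alpha> - coef \<alpha> 0 = (\<Sum>j<q. s j * M 0 j)" unfolding J_def by auto
  have "coef \<alpha> 0 \<in> R" using coef[of \<alpha>] unfolding cv_def by auto
  moreover have "\<alpha> = coef \<alpha> 0 + (\<Sum>j<q. s j * M 0 j)" using s by (simp add: algebra_simps)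
  ultimately show "\<alpha> \<in> {r + (\<Sum>j<q. s j * M 0 j) | r s. r \<in> R}" by blast
qed

end
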